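(* Consider fair division instances with $n=2$ agents, $m$ divisible goods, additive valuations and generalized assignment constraints (sizes and budgets publicly known; agents report valuations). Let $\mathcal{M}$ be the mechanism that splits each good $g$ into two identical halves $g^{(1)},g^{(2)}$, forms $S_1=\{g^{(1)}:g\in[m]\}$ and $S_2=\{g^{(2)}:g\in[m]\}$, and for each agent $i\in\{1,2\}$ sets $x_i$ to be a maximum-valued (with respect to $i$'s reported valuation) feasible-for-$i$ fractional subset of $S_i$, the rest going to charity. Then $\mathcal{M}$ is truthful and always outputs an FEF allocation.
   Context: An allocation is $x=(x_1,x_2)$ with $x_i\in[0,1]^m$ and $x_{1,g}+x_{2,g}\le1$; the charity receives $x_{\mathrm{charity},g}=1-x_{1,g}-x_{2,g}$. Additive valuations: $v_i(y)=\sum_g y_g v_{i,g}$. Generalized assignment constraints: agent $i$ has sizes $s_i(g)\ge0$ and budget $B_i$; bundle $y$ is feasible for $i$ iff $\sum_g s_i(g)y_g\le B_i$. A feasible allocation is FEF if for all agents $i,j$, every $y\le x_j$ (componentwise) feasible for $i$ has $v_i(x_i)\ge v_i(y)$, and every $y\le x_{\mathrm{charity}}$ feasible for $i$ has $v_i(x_i)\ge v_i(y)$. A mechanism maps reported additive valuation profiles to feasible allocations; it is truthful if for every agent $i$ with true valuation $v_i$ and every profile of reports of the others, agent $i$'s true value for her bundle when reporting $v_i$ is at least her true value for her bundle under any misreport $v_i'$. *)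

theory Defs
  imports Complex_Main
begin

text \<open>Two agents, numbered 1 and 2; goods are 0..m-1. A (fractional) bundle is a function
  nat => real whose entries on goods g < m lie in [0,1]. Valuations, sizes and reports are
  functions nat => real indexed by goods; profiles are indexed by agents.\<close>

definition val :: "nat \<Rightarrow> (nat \<Rightarrow> real) \<Rightarrow> (nat \<Rightarrow> real) \<Rightarrow> real" where
  "val m v y = (\<Sum>g<m. y g * v g)"

definition is_bundle :: "nat \<Rightarrow> (nat \<Rightarrow> real) \<Rightarrow> bool" where
  "is_bundle m y \<longleftrightarrow> (\<forall>g<m. 0 \<le> y g \<and> y g \<le> 1)"

definition feasible_for :: "nat \<Rightarrow> (nat \<Rightarrow> real) \<Rightarrow> real \<Rightarrow> (nat \<Rightarrow> real) \<Rightarrow> bool" where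
  "feasible_for m s B y \<longleftrightarrow> is_bundle m y \<and> (\<Sum>g<m. s g * y g) \<le> B"

definition charity :: "(nat \<Rightarrow> nat \<Rightarrow> real) \<Rightarrow> nat \<Rightarrow> real" where
  "charity x g = 1 - x 1 g - x 2 g"

definition below :: "nat \<Rightarrow> (nat \<Rightarrow> real) \<Rightarrow> (nat \<Rightarrow> real) \<Rightarrow> bool" where
  "below m y z \<longleftrightarrow> (\<forall>g<m. y g \<le> z g)"

definition feasible_alloc ::
  "nat \<Rightarrow> (nat \<Rightarrow> nat \<Rightarrow> real) \<Rightarrow> (nat \<Rightarrow> real) \<Rightarrow> (nat \<Rightarrow> nat \<Rightarrow> real) \<Rightarrow> bool" where
  "feasible_alloc m s B x \<longleftrightarrow>
     (\<forall>i\<in>{1,2}. feasible_for m (s i) (B i) (x i)) \<and> (\<forall>g<m. x 1 g + x 2 g \<le> 1)"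

definition FEF ::
  "nat \<Rightarrow> (nat \<Rightarrow> nat \<Rightarrow> real) \<Rightarrow> (nat \<Rightarrow> real) \<Rightarrow> (nat \<Rightarrow> nat \<Rightarrow> real) \<Rightarrow> (nat \<Rightarrow> nat \<Rightarrow> real) \<Rightarrow> bool" where
  "FEF m s B v x \<longleftrightarrow> feasible_alloc m s B x \<and>
     (\<forall>i\<in>{1,2}. \<forall>j\<in>{1,2}. \<forall>y. feasible_for m (s i) (B i) y \<and> below m y (x j)
         \<longrightarrow> val m (v i) y \<le> val m (v i) (x i)) \<and>
     (\<forall>i\<in>{1,2}. \<forall>y. feasible_for m (s i) (B i) y \<and> below m y (charity x)
         \<longrightarrow> val m (v i) y \<le> val m (v i) (x i))"

definition valid_profile :: "nat \<Rightarrow> (nat \<Rightarrow> nat \<Rightarrow> real) \<Rightarrow> bool" where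
  "valid_profile m v \<longleftrightarrow> (\<forall>i\<in>{1,2}. \<forall>g<m. 0 \<le> v i g)"

text \<open>A fractional subset of S_i (the i-th halves) is a bundle with every entry at most 1/2.\<close>
definition half_bundle :: "nat \<Rightarrow> (nat \<Rightarrow> real) \<Rightarrow> bool" where
  "half_bundle m y \<longleftrightarrow> (\<forall>g<m. y g \<le> 1/2)"

definition halves_mechanism ::
  "nat \<Rightarrow> (nat \<Rightarrow> nat \<Rightarrow> real) \<Rightarrow> (nat \<Rightarrow> real) \<Rightarrow>
   ((nat \<Rightarrow> nat \<Rightarrow> real) \<Rightarrow> (nat \<Rightarrow> nat \<Rightarrow> real)) \<Rightarrow> bool" where
  "halves_mechanism m s B M \<longleftrightarrow>
     (\<forall>v. valid_profile m v \<longrightarrow> (\<forall>i\<in>{1,2}.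
        feasible_for m (s i) (B i) (M v i) \<and> half_bundle m (M v i) \<and>
        (\<forall>y. feasible_for m (s i) (B i) y \<and> half_bundle m y
             \<longrightarrow> val m (v i) y \<le> val m (v i) (M v i))))"

definition truthful ::
  "nat \<Rightarrow> ((nat \<Rightarrow> nat \<Rightarrow> real) \<Rightarrow> (nat \<Rightarrow> nat \<Rightarrow> real)) \<Rightarrow> bool" where
  "truthful m M \<longleftrightarrow>
     (\<forall>v v' i. valid_profile m v \<and> valid_profile m v' \<and> i \<in> {1,2} \<and>
        (\<forall>k. k \<noteq> i \<longrightarrow> v' k = v k)
        \<longrightarrow> val m (v i) (M v' i) \<le> val m (v i) (M v i))"

end

theory Submission
  imports Defs
begin

lemma val_avg: "val m v (\<lambda>g. (y g + x g)/2) = (val m v y + val m v x)/2"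
  unfolding val_def by (simp add: sum_divide_distrib[symmetric] sum.distrib[symmetric] algebra_simps)

lemma feas_avg:
  assumes "feasible_for m s B y" "feasible_for m s B x"
  shows "(\<Sum>g<m. s g * ((y g + x g)/2)) \<le> B"
proof -
  have "(\<Sum>g<m. s g * ((y g + x g)/2)) = ((\<Sum>g<m. s g * y g) + (\<Sum>g<m. s g * x g))/2"
    by (simp add: sum_divide_distrib[symmetric] sum.distrib[symmetric] algebra_simps)
  thus ?thesis using assms unfolding feasible_for_def by simp
qed

theorem theorem5:
  fixes m :: nat
    and s :: "nat \<Rightarrow> nat \<Rightarrow> real"
    and B :: "nat \<Rightarrow> real"
    and M :: "(nat \<Rightarrow> nat \<Rightarrow> real) \<Rightarrow> (nat \<Rightarrow> nat \<Rightarrow> real)"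
  assumes sizes: "\<forall>i\<in>{1,2}. \<forall>g<m. 0 \<le> s i g"
    and budgets: "\<forall>i\<in>{1,2}. 0 \<le> B i"
    and mech: "halves_mechanism m s B M"
  shows "truthful m M \<and> (\<forall>v. valid_profile m v \<longrightarrow> FEF m s B v (M v))"
proof
  show "truthful m M"
    unfolding truthful_def
  proof (intro allI impI)
    fix v v' i assume h: "valid_profile m v \<and> valid_profile m v' \<and> i \<in> {1,2} \<and> (\<forall>k. k \<noteq> i \<longrightarrow> v' k = v k)"
    then have "feasible_for m (s i) (B i) (M v' i) \<and> half_bundle m (M v' i)"
      using mech unfolding halves_mechanism_def by blast
    then show "val m (v i) (M v' i) \<le> val m (v i) (M v i)"
      using mech h unfolding halves_mechanism_def by blast
  qed
next
  show "\<forall>v. valid_profile m v \<longrightarrow> FEF m s B v (M v)"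
  proof (intro allI impI)
    fix v assume vp: "valid_profile m v"
    have P: "\<And>i. i \<in> {1,2} \<Longrightarrow> feasible_for m (s i) (B i) (M v i) \<and> half_bundle m (M v i) \<and>
        (\<forall>y. feasible_for m (s i) (B i) y \<and> half_bundle m y
             \<longrightarrow> val m (v i) y \<le> val m (v i) (M v i))"
      using mech vp unfolding halves_mechanism_def by blast
    have FA: "feasible_alloc m s B (M v)"
    proof -
      have "\<forall>g<m. M v 1 g + M v 2 g \<le> 1"
      proof (intro allI impI)
        fix g assume "g < m"
        then have "M v 1 g \<le> 1/2" "M v 2 g \<le> 1/2" using P[of 1] P[of 2] unfolding half_bundle_def by auto
        thus "M v 1 g + M v 2 g \<le> 1" by simp
      qed
      thus ?thesis unfolding feasible_alloc_def using P[of 1] P[of 2] by blast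
    qed
    have E: "val m (v i) y \<le> val m (v i) (M v i)"
      if i: "i \<in> {1,2}" and j: "j \<in> {1,2}" and y: "feasible_for m (s i) (B i) y" "below m y (M v j)" for i j y
    proof -
      have "half_bundle m y" using y(2) P[OF j] unfolding below_def half_bundle_def by force
      thus ?thesis using P[OF i] y(1) by blast
    qed
    have C: "val m (v i) y \<le> val m (v i) (M v i)"
      if i: "i \<in> {1,2}" and y: "feasible_for m (s i) (B i) y" "below m y (charity (M v))" for i y
    proof -
      define w where "w = (\<lambda>g. (y g + M v i g)/2)"
      have xi: "feasible_for m (s i) (B i) (M v i)" "half_bundle m (M v i)" using P[OF i] by auto
      have yle: "\<forall>g<m. y g \<le> 1 - M v i g"
        using y(2) xi P[of 1] P[of 2] i unfolding below_def charity_def feasible_for_def is_bundle_def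
        by fastforce
      have "feasible_for m (s i) (B i) w"
        using feas_avg[OF y(1) xi(1)] y(1) xi(1) yle
        unfolding w_def feasible_for_def is_bundle_def by auto
      moreover have "half_bundle m w" using yle unfolding w_def half_bundle_def by auto
      ultimately have "val m (v i) w \<le> val m (v i) (M v i)" using P[OF i] by blast
      thus ?thesis unfolding w_def val_avg by simp
    qed
    show "FEF m s B v (M v)" unfolding FEF_def using FA E C by blast
  qed
qed

end
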